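(* Let $\mathcal H=L^2([0,1])$ and for $t\in[0,1]$ let $\phi_t=\chi_{[0,t]}$. Then $\{\phi_t\}_{t\in[0,1]}$ is a continuous Bessel family over $[0,1]$ with Lebesgue measure, and there is no Lebesgue measurable set $E\subset[0,1]$ such that $S_{\phi,E}=\tfrac12 S_{\phi,[0,1]}$.
   Context: A family $\{\phi_t\}_{t\in X}$ of vectors in $\mathcal H$ is a continuous Bessel family (with bound $B$) over the measure space $(X,\mu)$ if (i) for each $f\in\mathcal H$ the function $t\mapsto\langle f,\phi_t\rangle$ is measurable, and (ii) there is $B<\infty$ with $\int_X|\langle f,\phi_t\rangle|^2\,d\mu(t)\le B\|f\|^2$ for all $f\in\mathcal H$. For measurable $E\subset X$, the partial frame operator is $S_{\phi,E}f=\int_E\langle f,\phi_t\rangle\phi_t\,d\mu(t)$ (defined weakly), $f\in\mathcal H$. Here $\chi_A$ denotes the indicator function of $A$. *)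

theory Defs
  imports "HOL-Analysis.Analysis"
begin

definition L2_01 :: "(real \<Rightarrow> complex) set" where
  "L2_01 = {f. f \<in> borel_measurable (lebesgue_on {0..1}) \<and>
               integrable (lebesgue_on {0..1}) (\<lambda>x. (cmod (f x))\<^sup>2)}"

definition l2_inner :: "(real \<Rightarrow> complex) \<Rightarrow> (real \<Rightarrow> complex) \<Rightarrow> complex" where
  "l2_inner f g = (LINT x|lebesgue_on {0..1}. f x * cnj (g x))"

definition l2_norm :: "(real \<Rightarrow> complex) \<Rightarrow> real" where
  "l2_norm f = sqrt (LINT x|lebesgue_on {0..1}. (cmod (f x))\<^sup>2)"

definition cont_bessel_bound :: "'a measure \<Rightarrow> ('a \<Rightarrow> real \<Rightarrow> complex) \<Rightarrow> real \<Rightarrow> bool" where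
  "cont_bessel_bound M \<phi> B \<longleftrightarrow>
     (\<forall>t\<in>space M. \<phi> t \<in> L2_01) \<and>
     (\<forall>f\<in>L2_01. (\<lambda>t. l2_inner f (\<phi> t)) \<in> borel_measurable M) \<and>
     (\<forall>f\<in>L2_01. (\<integral>\<^sup>+ t. ennreal ((cmod (l2_inner f (\<phi> t)))\<^sup>2) \<partial>M)
                    \<le> ennreal (B * (l2_norm f)\<^sup>2))"

definition cont_bessel :: "'a measure \<Rightarrow> ('a \<Rightarrow> real \<Rightarrow> complex) \<Rightarrow> bool" where
  "cont_bessel M \<phi> \<longleftrightarrow> (\<exists>B. cont_bessel_bound M \<phi> B)"

text \<open>The partial frame operator S_{phi,E}, defined weakly:
  partial_frame_form M phi E f g = <S_{phi,E} f, g>.\<close>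

definition partial_frame_form ::
  "'a measure \<Rightarrow> ('a \<Rightarrow> real \<Rightarrow> complex) \<Rightarrow> 'a set \<Rightarrow> (real \<Rightarrow> complex) \<Rightarrow> (real \<Rightarrow> complex) \<Rightarrow> complex" where
  "partial_frame_form M \<phi> E f g =
     (LINT t:E|M. l2_inner f (\<phi> t) * l2_inner (\<phi> t) g)"

end

theory Submission
  imports Defs
begin


abbreviation M01 :: "real measure" where "M01 \<equiv> lebesgue_on {0..1}"

lemma fin01: "finite_measure M01"
  by (rule finite_measure_lebesgue_on) simp

lemma sf01: "sigma_finite_measure M01"
  using fin01 finite_measure.axioms(1) by blast

lemma space01[simp]: "space M01 = {0..1}" by simp

lemma emeasure_space01: "emeasure M01 {0..1} = 1"
  by (simp add: emeasure_restrict_space)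

lemma L2_int:
  assumes "f \<in> L2_01"
  shows "integrable M01 f" "integrable M01 (\<lambda>x. cmod (f x))"
proof -
  have m: "f \<in> borel_measurable M01" and sq: "integrable M01 (\<lambda>x. (cmod (f x))\<^sup>2)"
    using assms by (auto simp: L2_01_def)
  show i: "integrable M01 (\<lambda>x. cmod (f x))"
    by (rule finite_measure.square_integrable_imp_integrable[OF fin01]) (use m sq in auto)
  show "integrable M01 f"
    using i m integrable_norm_iff by blast
qed

lemma cs01:
  assumes "f \<in> L2_01"
  shows "(LINT x|M01. cmod (f x))\<^sup>2 \<le> (l2_norm f)\<^sup>2"
proof -
  have sq: "integrable M01 (\<lambda>x. (cmod (f x))\<^sup>2)"
    using assms by (auto simp: L2_01_def)
  note i = L2_int(2)[OF assms]
  define c where "c = (LINT x|M01. cmod (f x))"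
  have "0 \<le> (LINT x|M01. (cmod (f x) - c)\<^sup>2)" by simp
  also have "(LINT x|M01. (cmod (f x) - c)\<^sup>2) = (LINT x|M01. (cmod (f x))\<^sup>2 - 2 * c * cmod (f x) + c\<^sup>2)"
    by (simp add: power2_diff algebra_simps)
  also have "\<dots> = (LINT x|M01. (cmod (f x))\<^sup>2) - 2 * c * c + c\<^sup>2"
    using sq i by (simp add: c_def measure_restrict_space)
  finally have "c\<^sup>2 \<le> (LINT x|M01. (cmod (f x))\<^sup>2)" by (simp add: power2_eq_square)
  moreover have "0 \<le> (LINT x|M01. (cmod (f x))\<^sup>2)" by simp
  ultimately show ?thesis by (simp add: l2_norm_def c_def)
qed



lemma borel01: "f \<in> borel_measurable borel \<Longrightarrow> f \<in> borel_measurable M01"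
  by (intro measurable_restrict_space1 measurable_completion) simp

lemma id01[measurable]: "(\<lambda>x::real. x) \<in> borel_measurable M01"
  by (rule borel01) simp

lemma ind01[measurable]: "(\<lambda>x. indicator {a..b::real} x :: 'a::{real_normed_vector,zero_neq_one}) \<in> borel_measurable M01"
  by (rule borel01) measurable

lemma phi_L2: "(\<lambda>x. indicator {0..t} x :: complex) \<in> L2_01"
  unfolding L2_01_def
proof (intro CollectI conjI)
  show "(\<lambda>x. indicator {0..t} x :: complex) \<in> borel_measurable M01" by measurable
  show "integrable M01 (\<lambda>x. (cmod (indicator {0..t} x :: complex))\<^sup>2)"
    by (rule Bochner_Integration.integrable_bound[OF Lebesgue_Measure.integrable_const_ivl[where c="1::real" and a=0 and b=1]]) (auto simp: indicator_def)
qed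

lemma inner_phi: "l2_inner f (\<lambda>x. indicator {0..t} x :: complex) = (LINT x|M01. f x * indicator {0..t} x)"
  unfolding l2_inner_def by (rule Bochner_Integration.integral_cong) (auto simp: indicator_def)

lemma int_phi:
  assumes "f \<in> L2_01"
  shows "integrable M01 (\<lambda>x. f x * indicator {0..t} x)"
proof (rule Bochner_Integration.integrable_bound[OF L2_int(1)[OF assms]])
  have "f \<in> borel_measurable M01" using assms by (auto simp: L2_01_def)
  then show "(\<lambda>x. f x * indicator {0..t} x) \<in> borel_measurable M01" by measurable
  show "AE x in M01. norm (f x * indicator {0..t} x) \<le> norm (f x)"
    by (auto simp: indicator_def norm_mult)
qed

lemma inner_bound:
  assumes "f \<in> L2_01"
  shows "(cmod (l2_inner f (\<lambda>x. indicator {0..t} x :: complex)))\<^sup>2 \<le> (l2_norm f)\<^sup>2"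
proof -
  have "cmod (l2_inner f (\<lambda>x. indicator {0..t} x :: complex)) \<le> (LINT x|M01. cmod (f x))"
    unfolding inner_phi
    by (rule Bochner_Integration.integral_norm_bound_integral[OF int_phi[OF assms] L2_int(2)[OF assms]])
       (auto simp: indicator_def norm_mult)
  then have "(cmod (l2_inner f (\<lambda>x. indicator {0..t} x :: complex)))\<^sup>2 \<le> (LINT x|M01. cmod (f x))\<^sup>2"
    by (simp add: power_mono)
  then show ?thesis using cs01[OF assms] by linarith
qed

lemma inner_meas:
  assumes "f \<in> L2_01"
  shows "(\<lambda>t. l2_inner f (\<lambda>x. indicator {0..t} x :: complex)) \<in> borel_measurable M01"
proof -
  have m[measurable]: "f \<in> borel_measurable M01" using assms by (auto simp: L2_01_def)
  have eq: "(\<lambda>(t, x). f x * indicator {0..t} x :: complex) =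
     (\<lambda>p. f (snd p) * (if 0 \<le> snd p \<and> snd p \<le> fst p then 1 else 0))"
    by (auto simp: indicator_def fun_eq_iff)
  have "(\<lambda>(t, x). f x * indicator {0..t} x :: complex) \<in> borel_measurable (M01 \<Otimes>\<^sub>M M01)"
    unfolding eq by measurable
  then have "(\<lambda>t. LINT x|M01. f x * indicator {0..t} x) \<in> borel_measurable M01"
    by (rule sigma_finite_measure.borel_measurable_lebesgue_integral[OF sf01])
  then show ?thesis unfolding inner_phi .
qed

lemma bessel_part: "cont_bessel M01 (\<lambda>(t::real) (x::real). (indicator {0..t} x :: complex))"
  unfolding cont_bessel_def cont_bessel_bound_def
proof (intro exI[of _ 1] conjI ballI)
  fix f assume f: "f \<in> L2_01"
  show "(\<lambda>t. l2_inner f (indicator {0..t})) \<in> borel_measurable M01"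
    using inner_meas[OF f] by simp
  have "(\<integral>\<^sup>+ t. ennreal ((cmod (l2_inner f (indicator {0..t})))\<^sup>2) \<partial>M01)
      \<le> (\<integral>\<^sup>+ t. ennreal ((l2_norm f)\<^sup>2) \<partial>M01)"
    by (rule nn_integral_mono) (use inner_bound[OF f] in \<open>auto intro: ennreal_leI\<close>)
  also have "\<dots> = ennreal ((l2_norm f)\<^sup>2)"
    by (simp add: emeasure_space01)
  finally show "(\<integral>\<^sup>+ t. ennreal ((cmod (l2_inner f (indicator {0..t})))\<^sup>2) \<partial>M01)
      \<le> ennreal (1 * (l2_norm f)\<^sup>2)" by simp
qed (auto intro: phi_L2[simplified])



definition G :: "real \<Rightarrow> nat \<Rightarrow> real \<Rightarrow> real" where
  "G r n t = real n * (if r \<le> t then min (r + 1 / real n) t - r else 0)"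

lemma measure01_Icc:
  assumes "0 \<le> a" "b \<le> 1" "a \<le> b"
  shows "measure M01 {a..b} = b - a"
proof -
  have "measure M01 {a..b} = measure lebesgue {a..b}"
    using assms by (subst measure_restrict_space) auto
  also have "\<dots> = measure lborel {a..b}" by (simp add: measure_completion)
  finally show ?thesis using assms by simp
qed

lemma inner_fn:
  assumes r: "0 \<le> r" "r < 1" and n: "n > 0" and t: "t \<in> {0..1}"
  shows "l2_inner (\<lambda>x. complex_of_real (real n) * indicator {r..r+1/real n} x) (\<lambda>x. indicator {0..t} x)
       = complex_of_real (G r n t)"
proof (cases "r \<le> t")
  case True
  let ?b = "min (r + 1 / real n) t"
  have "l2_inner (\<lambda>x. complex_of_real (real n) * indicator {r..r+1/real n} x) (\<lambda>x. indicator {0..t} x)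
      = (LINT x|M01. complex_of_real (real n * indicator {r..?b} x))"
    unfolding inner_phi
    by (rule Bochner_Integration.integral_cong) (use r True in \<open>auto simp: indicator_def\<close>)
  also have "\<dots> = complex_of_real (real n * measure M01 {r..?b})"
    using r True t by (simp add: Int_absorb2)
  also have "measure M01 {r..?b} = ?b - r"
    using r True t by (intro measure01_Icc) auto
  finally show ?thesis using True by (simp add: G_def)
next
  case False
  have "l2_inner (\<lambda>x. complex_of_real (real n) * indicator {r..r+1/real n} x) (\<lambda>x. indicator {0..t} x)
      = (LINT x|M01. 0)"
    unfolding inner_phi
    by (rule Bochner_Integration.integral_cong) (use r False in \<open>auto simp: indicator_def\<close>)
  then show ?thesis using False by (simp add: G_def)
qed

lemma G_bound: assumes "n > 0" shows "0 \<le> G r n t" "G r n t \<le> 1"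
proof -
  have "min (r + 1 / real n) t - r \<le> 1 / real n" by simp
  then have "real n * (min (r + 1 / real n) t - r) \<le> real n * (1 / real n)"
    by (intro mult_left_mono) auto
  then show "G r n t \<le> 1" using assms by (auto simp: G_def)
  show "0 \<le> G r n t" using assms by (auto simp: G_def)
qed

lemma G_lim: assumes "t \<noteq> r" shows "(\<lambda>n. (G r n t)\<^sup>2) \<longlonglongrightarrow> indicator {r<..} t"
proof (cases "t < r")
  case True
  then show ?thesis by (simp add: G_def)
next
  case False
  with assms have tr: "r < t" by simp
  obtain N :: nat where N: "1 / (t - r) < N" using reals_Archimedean2 by blast
  have "eventually (\<lambda>n. (G r n t)\<^sup>2 = 1) sequentially"
    unfolding eventually_sequentially
  proof (intro exI[of _ N] allI impI)
    fix n assume "N \<le> n"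
    then have "1 / (t - r) < real n" using N by linarith
    moreover have "0 < 1 / (t - r)" using tr by simp
    ultimately have np: "real n > 0" by linarith
    have "1 / real n < t - r"
      using \<open>1 / (t - r) < real n\<close> tr np by (simp add: field_simps)
    then have "min (r + 1 / real n) t = r + 1 / real n" by simp
    then show "(G r n t)\<^sup>2 = 1" using tr np by (simp add: G_def)
  qed
  then have "(\<lambda>n. (G r n t)\<^sup>2) \<longlonglongrightarrow> 1"
    by (rule tendsto_eventually[THEN filterlim_cong[THEN iffD1, rotated 3]]) (auto elim: eventually_mono)
  then show ?thesis using tr by simp
qed



lemma sets01: "E \<in> sets M01 \<Longrightarrow> E \<subseteq> {0..1} \<and> E \<in> sets lebesgue"
  by (subst (asm) sets_restrict_space_iff) auto

lemma inner_swap: "l2_inner g f = cnj (l2_inner f g)"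
proof -
  have "l2_inner g f = (LINT x|M01. cnj (f x * cnj (g x)))"
    unfolding l2_inner_def by (rule Bochner_Integration.integral_cong) (auto simp: mult.commute)
  also have "\<dots> = cnj (l2_inner f g)" unfolding l2_inner_def by (rule Bochner_Integration.integral_cnj)
  finally show ?thesis .
qed

lemma fn_L2:
  "(\<lambda>x. complex_of_real (real n) * indicator {r..r+1/real n} x) \<in> L2_01"
  unfolding L2_01_def
proof (intro CollectI conjI)
  show "(\<lambda>x. complex_of_real (real n) * indicator {r..r+1/real n} x) \<in> borel_measurable M01" by measurable
  show "integrable M01 (\<lambda>x. (cmod (complex_of_real (real n) * indicator {r..r+1/real n} x))\<^sup>2)"
    by (rule Bochner_Integration.integrable_bound[OF Lebesgue_Measure.integrable_const_ivl[where c="(real n)^2" and a=0 and b=1]])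
       (auto simp: indicator_def)
qed

lemma AE_ne01: "AE t in M01. t \<noteq> r"
proof -
  have "AE t in lebesgue. t \<noteq> r"
    by (rule AE_completion) (rule AE_lborel_singleton)
  then show ?thesis
    by (subst AE_restrict_space_iff) (auto elim: eventually_mono)
qed

lemma pff_fn:
  assumes r: "0 \<le> r" "r < 1" and n: "n > 0"
  shows "partial_frame_form M01 (\<lambda>(t::real) (x::real). (indicator {0..t} x :: complex)) A
           (\<lambda>x. complex_of_real (real n) * indicator {r..r+1/real n} x)
           (\<lambda>x. complex_of_real (real n) * indicator {r..r+1/real n} x)
      = complex_of_real (LINT t|M01. indicator A t * (G r n t)\<^sup>2)"
proof -
  have "partial_frame_form M01 (\<lambda>(t::real) (x::real). (indicator {0..t} x :: complex)) A
           (\<lambda>x. complex_of_real (real n) * indicator {r..r+1/real n} x)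
           (\<lambda>x. complex_of_real (real n) * indicator {r..r+1/real n} x)
      = (LINT t|M01. complex_of_real (indicator A t * (G r n t)\<^sup>2))"
    unfolding partial_frame_form_def set_lebesgue_integral_def
    apply (rule Bochner_Integration.integral_cong[OF refl])
    subgoal for t
    proof -
      assume "t \<in> space M01"
      then have eq: "l2_inner (\<lambda>x. complex_of_real (real n) * indicator {r..r+1/real n} x) (\<lambda>x. indicator {0..t} x)
         = complex_of_real (G r n t)" by (intro inner_fn[OF r n]) auto
      show ?thesis using eq
        by (simp add: inner_swap[of "\<lambda>x. indicator {0..t} x"] scaleR_conv_of_real power2_eq_square)
    qed
    done
  then show ?thesis
    using integral_complex_of_real[of M01 "\<lambda>t. indicator A t * (G r n t)\<^sup>2"] by simp
qed

lemma lim_ind: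
  assumes r: "0 \<le> r" "r < 1" and A: "A \<in> sets M01"
  shows "(\<lambda>n. LINT t|M01. indicator A t * (G r (Suc n) t)\<^sup>2) \<longlonglongrightarrow> (LINT t|M01. indicator A t * indicator {r<..} t)"
proof (rule integral_dominated_convergence[where w="\<lambda>_. 1"])
  show "(\<lambda>t. indicator A t * indicator {r<..} t :: real) \<in> borel_measurable M01"
    using A by measurable
  show "(\<lambda>t. indicator A t * (G r (Suc n) t)\<^sup>2) \<in> borel_measurable M01" for n
    using A unfolding G_def by measurable
  show "integrable M01 (\<lambda>_. 1::real)" by simp
  show "AE t in M01. (\<lambda>n. indicator A t * (G r (Suc n) t)\<^sup>2) \<longlonglongrightarrow> indicator A t * indicator {r<..} t"
    using AE_ne01[of r]
  proof (rule eventually_mono)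
    fix t assume "t \<noteq> r"
    from G_lim[OF this] have "(\<lambda>n. (G r (Suc n) t)\<^sup>2) \<longlonglongrightarrow> indicator {r<..} t"
      by (rule LIMSEQ_Suc)
    then show "(\<lambda>n. indicator A t * (G r (Suc n) t)\<^sup>2) \<longlonglongrightarrow> indicator A t * indicator {r<..} t"
      by (intro tendsto_mult tendsto_const)
  qed
  show "AE t in M01. norm (indicator A t * (G r (Suc n) t)\<^sup>2) \<le> 1" for n
  proof (rule AE_I2)
    fix t
    have "0 \<le> G r (Suc n) t" "G r (Suc n) t \<le> 1" using G_bound[of "Suc n"] by auto
    then have "(G r (Suc n) t)\<^sup>2 \<le> 1" by (simp add: power_le_one)
    then show "norm (indicator A t * (G r (Suc n) t)\<^sup>2) \<le> 1"
      by (auto simp: indicator_def)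
  qed
qed



lemma int_ind2:
  assumes "A \<in> sets M01"
  shows "(LINT t|M01. indicator A t * indicator {r<..} t :: real) = measure lebesgue (A \<inter> {r<..})"
proof -
  have A: "A \<subseteq> {0..1}" "A \<in> sets lebesgue" using sets01[OF assms] by auto
  have "(LINT t|M01. indicator A t * indicator {r<..} t) = (LINT t|M01. indicator (A \<inter> {r<..}) t :: real)"
    by (rule Bochner_Integration.integral_cong) (auto simp: indicator_def)
  also have "\<dots> = measure M01 (A \<inter> {r<..})"
  proof -
    have "A \<inter> {r<..} \<inter> space M01 = A \<inter> {r<..}" using A by auto
    then show ?thesis by simp
  qed
  also have "\<dots> = measure lebesgue (A \<inter> {r<..})"
    using A by (subst measure_restrict_space) auto
  finally show ?thesis .
qed

lemma half_measure:
  assumes E: "E \<in> sets M01"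
    and H: "\<forall>f\<in>L2_01. \<forall>g\<in>L2_01.
             partial_frame_form M01 (\<lambda>(t::real) (x::real). (indicator {0..t} x :: complex)) E f g =
             (1/2) * partial_frame_form M01 (\<lambda>(t::real) (x::real). (indicator {0..t} x :: complex)) {0..1} f g"
    and r: "0 \<le> r" "r < 1"
  shows "measure lebesgue (E \<inter> {r<..}) = (1 - r) / 2"
proof -
  have I: "{0..1::real} \<in> sets M01" by (simp add: sets_restrict_space_iff)
  have eq: "(LINT t|M01. indicator E t * (G r (Suc n) t)\<^sup>2) = 1/2 * (LINT t|M01. indicator {0..1} t * (G r (Suc n) t)\<^sup>2)" for n
  proof -
    have "complex_of_real (LINT t|M01. indicator E t * (G r (Suc n) t)\<^sup>2)
        = (1/2) * complex_of_real (LINT t|M01. indicator {0..1} t * (G r (Suc n) t)\<^sup>2)"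
      using H[rule_format, OF fn_L2[of "Suc n" r] fn_L2[of "Suc n" r]]
      unfolding pff_fn[OF r zero_less_Suc] .
    then have "complex_of_real (LINT t|M01. indicator E t * (G r (Suc n) t)\<^sup>2)
        = complex_of_real (1/2 * (LINT t|M01. indicator {0..1} t * (G r (Suc n) t)\<^sup>2))"
      by simp
    then show ?thesis using of_real_eq_iff by blast
  qed
  have l1: "(\<lambda>n. LINT t|M01. indicator E t * (G r (Suc n) t)\<^sup>2) \<longlonglongrightarrow> measure lebesgue (E \<inter> {r<..})"
    using lim_ind[OF r E] unfolding int_ind2[OF E] .
  have "(\<lambda>n. LINT t|M01. indicator {0..1} t * (G r (Suc n) t)\<^sup>2) \<longlonglongrightarrow> measure lebesgue ({0..1} \<inter> {r<..})"
    using lim_ind[OF r I] unfolding int_ind2[OF I] .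
  then have "(\<lambda>n. 1/2 * (LINT t|M01. indicator {0..1} t * (G r (Suc n) t)\<^sup>2)) \<longlonglongrightarrow> 1/2 * measure lebesgue ({0..1} \<inter> {r<..})"
    by (intro tendsto_mult tendsto_const)
  then have l2: "(\<lambda>n. LINT t|M01. indicator E t * (G r (Suc n) t)\<^sup>2) \<longlonglongrightarrow> 1/2 * measure lebesgue ({0..1} \<inter> {r<..})"
    unfolding eq .
  have "measure lebesgue (E \<inter> {r<..}) = 1/2 * measure lebesgue ({0..1} \<inter> {r<..})"
    using LIMSEQ_unique[OF l1 l2] .
  also have "{0..1} \<inter> {r<..} = {r<..1::real}" using r by auto
  also have "measure lebesgue {r<..1::real} = 1 - r"
    using r by (simp add: measure_completion)
  finally show ?thesis by simp
qed



lemma shift_neg: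
  fixes x :: real
  assumes B: "B \<in> sets borel" "B \<subseteq> {0..1}" and x: "x < 0"
  shows "emeasure lborel (B \<inter> {x<..}) = emeasure lborel (B \<inter> {0<..})"
proof (rule emeasure_eq_AE)
  show "AE y in lborel. (y \<in> B \<inter> {x<..}) = (y \<in> B \<inter> {0<..})"
  proof -
    have "AE y in lborel. y \<noteq> (0::real)" by (rule AE_lborel_singleton)
    then show ?thesis
    proof eventually_elim
      case (elim y)
      then show ?case using B x by auto
    qed
  qed
qed (use B in auto)

lemma no_E:
  assumes E: "E \<in> sets M01"
    and hm: "\<And>r. 0 \<le> r \<Longrightarrow> r < 1 \<Longrightarrow> measure lebesgue (E \<inter> {r<..}) = (1 - r) / 2"
  shows False
proof -
  have Esub: "E \<subseteq> {0..1}" and Eleb: "E \<in> sets lebesgue" using sets01[OF E] by auto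
  obtain S N N' where SN: "E = S \<union> N" "N \<subseteq> N'" "N' \<in> null_sets lborel" "S \<in> sets lborel"
    using Eleb by (rule sets_completionE)
  have Sb[measurable]: "S \<in> sets borel" using SN by simp
  have Ssub: "S \<subseteq> {0..1}" using SN Esub by auto
  have ES: "emeasure lebesgue (E \<inter> A) = emeasure lborel (S \<inter> A)" if A: "A \<in> sets borel" for A
  proof -
    have "AE x in lborel. x \<notin> N'" using SN(3) by (rule AE_not_in)
    then have "AE x in lebesgue. x \<notin> N'" by (rule AE_completion)
    then have "AE x in lebesgue. (x \<in> E \<inter> A) = (x \<in> S \<inter> A)"
      by (rule eventually_mono) (use SN in auto)
    then have "emeasure lebesgue (E \<inter> A) = emeasure lebesgue (S \<inter> A)"
      by (rule emeasure_eq_AE) (use Eleb A SN in auto)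
    also have "\<dots> = emeasure lborel (S \<inter> A)"
      using A SN by simp
    finally show ?thesis .
  qed
  define Q where "Q x = emeasure lborel (S \<inter> {x<..})" for x :: real
  define R where "R x = ennreal (1/2) * emeasure lborel ({0..1} \<inter> {x<..})" for x :: real
  have QR01: "Q x = R x" if "0 \<le> x" "x < 1" for x
  proof -
    have fin: "emeasure lebesgue (E \<inter> {x<..}) \<noteq> top"
    proof -
      have "emeasure lebesgue (E \<inter> {x<..}) \<le> emeasure lebesgue {0..1::real}"
        using Esub by (intro emeasure_mono) auto
      also have "\<dots> = 1" by simp
      finally show ?thesis by (auto simp: top_unique)
    qed
    have "Q x = emeasure lebesgue (E \<inter> {x<..})" unfolding Q_def by (rule ES[symmetric]) simp
    also have "\<dots> = ennreal (measure lebesgue (E \<inter> {x<..}))"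
      using fin by (rule emeasure_eq_ennreal_measure)
    also have "\<dots> = ennreal ((1 - x) / 2)" using hm that by simp
    also have "\<dots> = ennreal (1/2 * (1 - x))" by simp
    also have "\<dots> = ennreal (1/2) * ennreal (1 - x)"
      using that by (intro ennreal_mult) auto
    also have "ennreal (1 - x) = emeasure lborel ({0..1} \<inter> {x<..})"
    proof -
      have "{0..1} \<inter> {x<..} = {x<..1::real}" using that by auto
      then show ?thesis using that by simp
    qed
    finally show ?thesis unfolding R_def .
  qed
  have QR: "Q x = R x" for x
  proof (cases "x < 0")
    case True
    have "Q x = Q 0" unfolding Q_def using shift_neg[OF Sb Ssub True] .
    moreover have "R x = R 0" unfolding R_def using shift_neg[of "{0..1}", OF _ _ True] by simp
    ultimately show ?thesis using QR01[of 0] by simp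
  next
    case False
    show ?thesis
    proof (cases "x < 1")
      case True
      then show ?thesis using QR01 False by simp
    next
      case False
      then have "S \<inter> {x<..} = {}" "{0..1} \<inter> {x<..} = {}" using Ssub by auto
      then show ?thesis unfolding Q_def R_def by simp
    qed
  qed
  define Ma where "Ma = density lborel (indicator S :: real \<Rightarrow> ennreal)"
  define Nb where "Nb = density lborel (\<lambda>x::real. ennreal (1/2) * indicator {0..1} x)"
  have Ma: "emeasure Ma A = emeasure lborel (S \<inter> A)" if [measurable]: "A \<in> sets borel" for A
  proof -
    have "emeasure Ma A = (\<integral>\<^sup>+ x. indicator (S \<inter> A) x \<partial>lborel)"
      unfolding Ma_def by (subst emeasure_density) (auto simp: indicator_inter_arith[symmetric])
    also have "\<dots> = emeasure lborel (S \<inter> A)" by (rule nn_integral_indicator) simp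
    finally show ?thesis .
  qed
  have Nb: "emeasure Nb A = ennreal (1/2) * emeasure lborel ({0..1} \<inter> A)" if [measurable]: "A \<in> sets borel" for A
  proof -
    have "emeasure Nb A = (\<integral>\<^sup>+ x. ennreal (1/2) * indicator ({0..1} \<inter> A) x \<partial>lborel)"
      unfolding Nb_def by (subst emeasure_density) (auto simp: indicator_inter_arith[symmetric] mult.assoc)
    also have "\<dots> = ennreal (1/2) * emeasure lborel ({0..1} \<inter> A)" by (rule nn_integral_cmult_indicator) simp
    finally show ?thesis .
  qed
  have "Ma = Nb"
  proof (rule measure_eqI_lessThan)
    show "sets Ma = sets borel" "sets Nb = sets borel" by (simp_all add: Ma_def Nb_def)
    show "emeasure Ma {x<..} < \<infinity>" for x
    proof -
      have "emeasure Ma {x<..} = emeasure lborel (S \<inter> {x<..})" by (simp add: Ma)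
      also have "\<dots> \<le> emeasure lborel {0..1::real}" using Ssub by (intro emeasure_mono) auto
      also have "\<dots> < \<infinity>" by simp
      finally show ?thesis .
    qed
    show "emeasure Ma {x<..} = emeasure Nb {x<..}" for x
      using QR[of x] by (simp add: Ma Nb Q_def R_def)
  qed
  then have "emeasure Ma S = emeasure Nb S" by simp
  then have e1: "emeasure lborel S = ennreal (1/2) * emeasure lborel S"
    using Ssub by (simp add: Ma Nb Int_absorb1)
  have "S \<inter> {-1<..} = S" using Ssub by auto
  then have "emeasure lborel S = Q (-1)" unfolding Q_def by simp
  also have "\<dots> = R (-1)" by (rule QR)
  also have "\<dots> = ennreal (1/2)"
  proof -
    have "{0..1} \<inter> {-1<..} = {0..1::real}" by auto
    then show ?thesis unfolding R_def by simp
  qed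
  finally have e2: "emeasure lborel S = ennreal (1/2)" .
  from e1 e2 have "ennreal (1/2) = ennreal (1/2) * ennreal (1/2)" by simp
  also have "\<dots> = ennreal (1/2 * (1/2))" by (rule ennreal_mult[symmetric]) auto
  also have "\<dots> = ennreal (1/4)" by simp
  finally have "ennreal (1/2) = ennreal (1/4)" .
  then have "(1/2::real) = 1/4" by (subst (asm) ennreal_inj) auto
  then show False by simp
qed


theorem mainTheorem9:
  defines "\<phi> \<equiv> (\<lambda>(t::real) (x::real). (indicator {0..t} x :: complex))"
  shows "cont_bessel (lebesgue_on {0..1}) \<phi> \<and>
    \<not> (\<exists>E. E \<in> sets (lebesgue_on {0..1}) \<and>
          (\<forall>f\<in>L2_01. \<forall>g\<in>L2_01.
             partial_frame_form (lebesgue_on {0..1}) \<phi> E f g =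
             (1/2) * partial_frame_form (lebesgue_on {0..1}) \<phi> {0..1} f g))"
proof
  show "cont_bessel (lebesgue_on {0..1}) \<phi>" unfolding \<phi>_def by (rule bessel_part)
  show "\<not> (\<exists>E. E \<in> sets (lebesgue_on {0..1}) \<and>
          (\<forall>f\<in>L2_01. \<forall>g\<in>L2_01.
             partial_frame_form (lebesgue_on {0..1}) \<phi> E f g =
             (1/2) * partial_frame_form (lebesgue_on {0..1}) \<phi> {0..1} f g))"
  proof
    assume "\<exists>E. E \<in> sets (lebesgue_on {0..1}) \<and>
          (\<forall>f\<in>L2_01. \<forall>g\<in>L2_01.
             partial_frame_form (lebesgue_on {0..1}) \<phi> E f g =
             (1/2) * partial_frame_form (lebesgue_on {0..1}) \<phi> {0..1} f g)"
    then obtain E where E: "E \<in> sets M01"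
      and H: "\<forall>f\<in>L2_01. \<forall>g\<in>L2_01.
             partial_frame_form M01 (\<lambda>(t::real) (x::real). (indicator {0..t} x :: complex)) E f g =
             (1/2) * partial_frame_form M01 (\<lambda>(t::real) (x::real). (indicator {0..t} x :: complex)) {0..1} f g"
      unfolding \<phi>_def by blast
    show False
      by (rule no_E[OF E half_measure[OF E H]])
  qed
qed

end
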